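(* Let $\mathbb{X}=\ell_\infty^3$ and let $\mathbb{Y}$ be a two-dimensional strictly convex, smooth Banach space. Let $x_1=(1,1,1)$, $x_2=(-1,1,1)$, $x_3=(-1,-1,1)$, $x_4=(1,-1,1)$. Let $T\in\mathbb{L}(\mathbb{X},\mathbb{Y})$ with $\|T\|=1$ and $M_T\cap\operatorname{Ext}(B_{\mathbb{X}})=\{\pm x_1,\pm x_2,\pm x_3,\pm x_4\}$. Then: (i) if $\operatorname{Rank}(T)=1$, then $T$ is $3$-smooth; (ii) if $\operatorname{Rank}(T)=2$, then $T$ is $4$-smooth.
   Context: $\mathbb{L}(\mathbb{X},\mathbb{Y})$ is the space of linear operators with the operator norm. $B_{\mathbb{X}}$ is the closed unit ball, $\operatorname{Ext}$ its set of extreme points, $M_T=\{x\in\mathbb{X}:\|x\|=1,\ \|Tx\|=\|T\|\}$. A Banach space is strictly convex if its unit sphere contains no nontrivial line segment, and smooth if every unit vector has a unique norm-one supporting functional. For a Banach space $\mathbb{Z}$ and a unit vector $z$, $J(z)=\{f\in \mathbb{Z}^*:\|f\|=1,\ f(z)=1\}$; $z$ is $k$-smooth if $\dim\operatorname{span} J(z)=k$ ($T$ considered in the unit sphere of $\mathbb{L}(\mathbb{X},\mathbb{Y})$). *)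

theory Defs
  imports "HOL-Analysis.Analysis"
begin

datatype linf3 = L3 real real real

fun c1 :: "linf3 \<Rightarrow> real" where "c1 (L3 a b c) = a"
fun c2 :: "linf3 \<Rightarrow> real" where "c2 (L3 a b c) = b"
fun c3 :: "linf3 \<Rightarrow> real" where "c3 (L3 a b c) = c"

lemma linf3_eq_iff: "x = y \<longleftrightarrow> c1 x = c1 y \<and> c2 x = c2 y \<and> c3 x = c3 y"
  by (cases x; cases y) auto

instantiation linf3 :: real_normed_vector
begin

definition "0 = L3 0 0 0"
definition "x + y = L3 (c1 x + c1 y) (c2 x + c2 y) (c3 x + c3 y)"
definition "x - y = L3 (c1 x - c1 y) (c2 x - c2 y) (c3 x - c3 y)"
definition "- x = L3 (- c1 x) (- c2 x) (- c3 x)"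
definition "scaleR r x = L3 (r * c1 x) (r * c2 x) (r * c3 x)"
definition norm_linf3_def: "norm x = max \<bar>c1 x\<bar> (max \<bar>c2 x\<bar> \<bar>c3 x\<bar>)"
definition "sgn (x::linf3) = scaleR (inverse (norm x)) x"
definition "dist (x::linf3) y = norm (x - y)"
definition "uniformity = (INF e\<in>{0 <..}. principal {(x::linf3, y). dist x y < e})"
definition "open (U::linf3 set) \<longleftrightarrow>
   (\<forall>x\<in>U. \<forall>\<^sub>F (x', y) in uniformity. x' = x \<longrightarrow> y \<in> U)"

lemma linf3_sel[simp]:
  "c1 0 = 0" "c2 0 = 0" "c3 0 = 0"
  "c1 (x + y) = c1 x + c1 y" "c2 (x + y) = c2 x + c2 y" "c3 (x + y) = c3 x + c3 y"
  "c1 (x - y) = c1 x - c1 y" "c2 (x - y) = c2 x - c2 y" "c3 (x - y) = c3 x - c3 y"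
  "c1 (- x) = - c1 x" "c2 (- x) = - c2 x" "c3 (- x) = - c3 x"
  "c1 (scaleR r x) = r * c1 x" "c2 (scaleR r x) = r * c2 x" "c3 (scaleR r x) = r * c3 x"
  by (simp_all add: zero_linf3_def plus_linf3_def minus_linf3_def uminus_linf3_def
      scaleR_linf3_def)

instance
proof
  fix x y z :: linf3 and a b :: real
  show "x + y + z = x + (y + z)" by (simp add: linf3_eq_iff)
  show "x + y = y + x" by (simp add: linf3_eq_iff)
  show "0 + x = x" by (simp add: linf3_eq_iff)
  show "- x + x = 0" by (simp add: linf3_eq_iff)
  show "x - y = x + - y" by (simp add: linf3_eq_iff)
  show "a *\<^sub>R (x + y) = a *\<^sub>R x + a *\<^sub>R y" by (simp add: linf3_eq_iff algebra_simps)
  show "(a + b) *\<^sub>R x = a *\<^sub>R x + b *\<^sub>R x" by (simp add: linf3_eq_iff algebra_simps)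
  show "a *\<^sub>R b *\<^sub>R x = (a * b) *\<^sub>R x" by (simp add: linf3_eq_iff)
  show "1 *\<^sub>R x = x" by (simp add: linf3_eq_iff)
  show "dist x y = norm (x - y)" by (simp add: dist_linf3_def)
  show "sgn x = inverse (norm x) *\<^sub>R x" by (simp add: sgn_linf3_def)
  show "norm x = 0 \<longleftrightarrow> x = 0"
    by (simp add: norm_linf3_def linf3_eq_iff max_def) auto
  show "norm (x + y) \<le> norm x + norm y"
  proof -
    have "\<bar>c1 x + c1 y\<bar> \<le> norm x + norm y" "\<bar>c2 x + c2 y\<bar> \<le> norm x + norm y"
      "\<bar>c3 x + c3 y\<bar> \<le> norm x + norm y"
      unfolding norm_linf3_def by (simp_all add: abs_triangle_ineq add_mono max.coboundedI1
          max.coboundedI2 order_trans[OF abs_triangle_ineq])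
    then show ?thesis by (simp add: norm_linf3_def)
  qed
  show "norm (a *\<^sub>R x) = \<bar>a\<bar> * norm x"
    by (simp add: norm_linf3_def abs_mult max_mult_distrib_left)
  show "uniformity = (INF e\<in>{0 <..}. principal {(x::linf3, y). dist x y < e})"
    by (simp add: uniformity_linf3_def)
  fix U :: "linf3 set"
  show "open U \<longleftrightarrow> (\<forall>x\<in>U. \<forall>\<^sub>F (x', y) in uniformity. x' = x \<longrightarrow> y \<in> U)"
    by (simp add: open_linf3_def)
qed

end

definition ball_X :: "linf3 set" where "ball_X = {x. norm x \<le> 1}"

definition Ext :: "'a::real_normed_vector set \<Rightarrow> 'a set" where
  "Ext B = {x. x extreme_point_of B}"

definition M :: "('a::real_normed_vector \<Rightarrow>\<^sub>L 'b::real_normed_vector) \<Rightarrow> 'a set" where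
  "M T = {x. norm x = 1 \<and> norm (blinfun_apply T x) = norm T}"

definition J :: "'a::real_normed_vector \<Rightarrow> ('a \<Rightarrow>\<^sub>L real) set" where
  "J z = {f. norm f = 1 \<and> blinfun_apply f z = 1}"

definition k_smooth :: "'a::real_normed_vector \<Rightarrow> nat \<Rightarrow> bool" where
  "k_smooth z k \<longleftrightarrow> norm z = 1 \<and> real_vector.dim (real_vector.span (J z)) = k"

definition strictly_convex_space :: "'a::real_normed_vector itself \<Rightarrow> bool" where
  "strictly_convex_space _ \<longleftrightarrow>
     \<not> (\<exists>x y :: 'a. x \<noteq> y \<and> closed_segment x y \<subseteq> sphere 0 1)"

definition smooth_space :: "'a::real_normed_vector itself \<Rightarrow> bool" where
  "smooth_space _ \<longleftrightarrow> (\<forall>z :: 'a. norm z = 1 \<longrightarrow> (\<exists>!f. f \<in> J z))"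

definition rank :: "('a::real_normed_vector \<Rightarrow>\<^sub>L 'b::real_normed_vector) \<Rightarrow> nat" where
  "rank T = real_vector.dim (range (blinfun_apply T))"

end

theory Submission
  imports Defs
begin

lemma seg_bound:
  fixes u w :: "'a::real_normed_vector"
  assumes s: "\<bar>s\<bar> \<le> 1" and h1: "norm (u + w) \<le> K" and h2: "norm (u - w) \<le> K"
  shows "norm (u + s *\<^sub>R w) \<le> K"
proof -
  have eq: "u + s *\<^sub>R w = ((1 + s)/2) *\<^sub>R (u + w) + ((1 - s)/2) *\<^sub>R (u - w)"
  proof -
    have "((1 + s)/2) *\<^sub>R (u + w) + ((1 - s)/2) *\<^sub>R (u - w)
       = (((1 + s)/2) + ((1 - s)/2)) *\<^sub>R u + (((1 + s)/2) - ((1 - s)/2)) *\<^sub>R w"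
      by (simp only: scaleR_add_right scaleR_diff_right scaleR_add_left scaleR_diff_left) (simp add: algebra_simps)
    also have "\<dots> = u + s *\<^sub>R w" by (simp add: field_simps)
    finally show ?thesis by simp
  qed
  have a: "0 \<le> (1 + s)/2" "0 \<le> (1 - s)/2" using s by auto
  have "norm (u + s *\<^sub>R w) \<le> norm (((1 + s)/2) *\<^sub>R (u + w)) + norm (((1 - s)/2) *\<^sub>R (u - w))"
    unfolding eq by (rule norm_triangle_ineq)
  also have "\<dots> = ((1 + s)/2) * norm (u + w) + ((1 - s)/2) * norm (u - w)"
    using a by simp
  also have "\<dots> \<le> ((1 + s)/2) * K + ((1 - s)/2) * K"
    using a h1 h2 by (intro add_mono mult_left_mono) auto
  also have "\<dots> = K" by (simp add: field_simps)
  finally show ?thesis .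
qed

lemma cube_bound:
  fixes a b c :: "'a::real_normed_vector"
  assumes h1: "norm (a + b + c) \<le> K" and h2: "norm (- a + b + c) \<le> K"
    and h3: "norm (- a - b + c) \<le> K" and h4: "norm (a - b + c) \<le> K"
    and al: "\<bar>\<alpha>\<bar> \<le> 1" and be: "\<bar>\<beta>\<bar> \<le> 1" and ga: "\<bar>\<gamma>\<bar> \<le> 1"
  shows "norm (\<alpha> *\<^sub>R a + \<beta> *\<^sub>R b + \<gamma> *\<^sub>R c) \<le> K"
proof -
  have h5: "norm (a + b - c) \<le> K" using h3 by (metis minus_diff_eq norm_minus_cancel diff_minus_eq_add uminus_add_conv_diff add.commute)
  have h6: "norm (- a + b - c) \<le> K" using h4 by (metis minus_diff_eq norm_minus_cancel diff_minus_eq_add uminus_add_conv_diff add.commute)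
  have h7: "norm (- a - b - c) \<le> K" using h1 by (metis minus_add_distrib norm_minus_cancel diff_conv_add_uminus)
  have h8: "norm (a - b - c) \<le> K" using h2 by (metis minus_diff_eq norm_minus_cancel diff_minus_eq_add uminus_add_conv_diff add.commute)
  have s1: "norm (a + \<beta> *\<^sub>R b + \<gamma> *\<^sub>R c) \<le> K"
  proof -
    have "norm ((a + c) + \<beta> *\<^sub>R b) \<le> K"
      by (rule seg_bound[OF be]) (use h1 h4 in \<open>simp_all add: algebra_simps\<close>)
    moreover have "norm ((a - c) + \<beta> *\<^sub>R b) \<le> K"
      by (rule seg_bound[OF be]) (use h5 h8 in \<open>simp_all add: algebra_simps\<close>)
    ultimately show ?thesis
      using seg_bound[OF ga, of "a + \<beta> *\<^sub>R b" c K] by (simp add: algebra_simps)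
  qed
  have s2: "norm (- a + \<beta> *\<^sub>R b + \<gamma> *\<^sub>R c) \<le> K"
  proof -
    have "norm ((- a + c) + \<beta> *\<^sub>R b) \<le> K"
      by (rule seg_bound[OF be]) (use h2 h3 in \<open>simp_all add: algebra_simps\<close>)
    moreover have "norm ((- a - c) + \<beta> *\<^sub>R b) \<le> K"
      by (rule seg_bound[OF be]) (use h6 h7 in \<open>simp_all add: algebra_simps\<close>)
    ultimately show ?thesis
      using seg_bound[OF ga, of "- a + \<beta> *\<^sub>R b" c K] by (simp add: algebra_simps)
  qed
  show ?thesis
    using seg_bound[OF al, of "\<beta> *\<^sub>R b + \<gamma> *\<^sub>R c" a K] s1 s2 by (simp add: algebra_simps)
qed

lemma linf3_decomp: "x = c1 x *\<^sub>R L3 1 0 0 + c2 x *\<^sub>R L3 0 1 0 + c3 x *\<^sub>R L3 0 0 1"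
  by (simp add: linf3_eq_iff)

lemma c_le_norm: "\<bar>c1 x\<bar> \<le> norm x" "\<bar>c2 x\<bar> \<le> norm x" "\<bar>c3 x\<bar> \<le> norm x"
  by (auto simp: norm_linf3_def)

lemma op_apply_decomp:
  fixes A :: "linf3 \<Rightarrow>\<^sub>L 'b::real_normed_vector"
  shows "blinfun_apply A x = c1 x *\<^sub>R A (L3 1 0 0) + c2 x *\<^sub>R A (L3 0 1 0) + c3 x *\<^sub>R A (L3 0 0 1)"
  by (subst linf3_decomp) (simp add: blinfun.add_right blinfun.scaleR_right)

lemma op_bound:
  fixes A :: "linf3 \<Rightarrow>\<^sub>L 'b::real_normed_vector"
  assumes h1: "norm (A (L3 1 1 1)) \<le> K" and h2: "norm (A (L3 (-1) 1 1)) \<le> K"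
    and h3: "norm (A (L3 (-1) (-1) 1)) \<le> K" and h4: "norm (A (L3 1 (-1) 1)) \<le> K"
  shows "norm A \<le> K"
proof -
  define a where "a = A (L3 1 0 0)"
  define b where "b = A (L3 0 1 0)"
  define c where "c = A (L3 0 0 1)"
  have dec: "\<And>x. A x = c1 x *\<^sub>R a + c2 x *\<^sub>R b + c3 x *\<^sub>R c"
    unfolding a_def b_def c_def by (rule op_apply_decomp)
  have v1: "norm (a + b + c) \<le> K" using h1 dec[of "L3 1 1 1"] by simp
  have v2: "norm (- a + b + c) \<le> K" using h2 dec[of "L3 (-1) 1 1"] by simp
  have v3: "norm (- a - b + c) \<le> K" using h3 dec[of "L3 (-1) (-1) 1"] by simp
  have v4: "norm (a - b + c) \<le> K" using h4 dec[of "L3 1 (-1) 1"] by simp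
  have K0: "0 \<le> K" using h1 norm_ge_zero order_trans by blast
  show ?thesis
  proof (rule norm_blinfun_bound[OF K0])
    fix x :: linf3
    show "norm (A x) \<le> K * norm x"
    proof (cases "x = 0")
      case True then show ?thesis by simp
    next
      case False
      define n where "n = norm x"
      have n0: "n > 0" using False n_def by simp
      have "A x = n *\<^sub>R ((c1 x / n) *\<^sub>R a + (c2 x / n) *\<^sub>R b + (c3 x / n) *\<^sub>R c)"
        using n0 by (simp add: dec scaleR_add_right)
      then have "norm (A x) = n * norm ((c1 x / n) *\<^sub>R a + (c2 x / n) *\<^sub>R b + (c3 x / n) *\<^sub>R c)"
        using n0 by simp
      also have "\<dots> \<le> n * K"
        using n0 c_le_norm[of x] unfolding n_def[symmetric]
        by (intro mult_left_mono cube_bound[OF v1 v2 v3 v4]) (auto simp: abs_divide divide_le_eq_1)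
      finally show ?thesis by (simp add: n_def mult.commute)
    qed
  qed
qed

lemma J_mem: "f \<in> J z \<longleftrightarrow> norm f = 1 \<and> blinfun_apply f z = 1"
  by (simp add: J_def)

lemma strict_conv:
  fixes u v :: "'b::real_normed_vector"
  assumes sc: "strictly_convex_space TYPE('b)"
    and nu: "norm u = 1" and nv: "norm v = 1" and gu: "g \<in> J u" and gv: "g \<in> J v"
  shows "u = v"
proof (rule ccontr)
  assume ne: "u \<noteq> v"
  have g1: "norm g = 1" "g u = 1" "g v = 1" using gu gv by (auto simp: J_mem)
  have "closed_segment u v \<subseteq> sphere 0 1"
  proof
    fix p assume "p \<in> closed_segment u v"
    then obtain t where t: "0 \<le> t" "t \<le> 1" and p: "p = (1 - t) *\<^sub>R u + t *\<^sub>R v"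
      by (auto simp: closed_segment_def)
    have "norm p \<le> norm ((1 - t) *\<^sub>R u) + norm (t *\<^sub>R v)" unfolding p by (rule norm_triangle_ineq)
    also have "\<dots> = 1" using t nu nv by simp
    finally have le: "norm p \<le> 1" .
    have "g p = (1 - t) * g u + t * g v" unfolding p by (simp add: blinfun.add_right blinfun.scaleR_right)
    also have "\<dots> = 1" using g1 by simp
    finally have "1 = g p" by simp
    also have "\<dots> \<le> norm (g p)" by simp
    also have "\<dots> \<le> norm g * norm p" by (rule norm_blinfun)
    finally have "1 \<le> norm p" using g1 by simp
    with le show "p \<in> sphere 0 1" by simp
  qed
  with ne sc show False unfolding strictly_convex_space_def by blast
qed

lemma slope_mono:
  fixes y z :: "'b::real_normed_vector"
  assumes ny: "norm y = 1" and t: "0 < t" "t \<le> s" and h: "norm (y + s *\<^sub>R z) < 1 + s * c"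
  shows "norm (y + t *\<^sub>R z) < 1 + t * c"
proof -
  have s0: "s > 0" using t by simp
  have eq: "y + t *\<^sub>R z = (1 - t/s) *\<^sub>R y + (t/s) *\<^sub>R (y + s *\<^sub>R z)"
    using s0 by (simp add: algebra_simps)
  have a: "0 \<le> 1 - t/s" "0 < t/s" using t s0 by (auto simp: field_simps)
  have "norm (y + t *\<^sub>R z) \<le> norm ((1 - t/s) *\<^sub>R y) + norm ((t/s) *\<^sub>R (y + s *\<^sub>R z))"
    unfolding eq by (rule norm_triangle_ineq)
  also have "\<dots> = (1 - t/s) + (t/s) * norm (y + s *\<^sub>R z)" using a ny s0 t by (simp add: abs_of_pos)
  also have "\<dots> < (1 - t/s) + (t/s) * (1 + s * c)"
    using a h by (intro add_strict_left_mono mult_strict_left_mono) auto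
  also have "\<dots> = 1 + t * c" using s0 by (simp add: field_simps)
  finally show ?thesis .
qed

lemma span_two_UNIV:
  fixes y z :: "'b::real_normed_vector"
  assumes dimY: "real_vector.dim (UNIV :: 'b set) = 2"
    and y0: "y \<noteq> 0" and zy: "z \<notin> real_vector.span {y}"
  shows "v \<in> real_vector.span {y, z}"
proof (rule ccontr)
  assume nv: "v \<notin> real_vector.span {y, z}"
  have iy: "independent {y}" using y0
    by (simp add: independent_insert span_empty)
  have iyz: "independent {z, y}"
    using zy iy by (rule real_vector.independent_insertI)
  have "{z, y} = {y, z}" by auto
  with iyz have iyz': "independent {y, z}" by simp
  have i3: "independent {v, y, z}"
    using nv iyz' by (rule real_vector.independent_insertI)
  obtain B :: "'b set" where B: "independent B" "UNIV \<subseteq> real_vector.span B"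
    "card B = real_vector.dim (UNIV :: 'b set)"
    using real_vector.basis_exists[of "UNIV :: 'b set"] by blast
  have fB: "finite B" using B(3) dimY by (metis card.infinite zero_neq_numeral)
  have "finite {v, y, z} \<and> card {v, y, z} \<le> card B"
    using real_vector.independent_span_bound[OF fB i3] B(2) by blast
  moreover have "y \<noteq> z" using zy real_vector.span_base[of y "{y}"] by auto
  moreover have "v \<noteq> y" "v \<noteq> z" using nv real_vector.span_base[of y "{y,z}"] real_vector.span_base[of z "{y,z}"] by auto
  ultimately show False using B(3) dimY by simp
qed

lemma smooth_dir:
  fixes y z :: "'b::real_normed_vector"
  assumes dimY: "real_vector.dim (UNIV :: 'b set) = 2"
    and sm: "smooth_space TYPE('b)"
    and ny: "norm y = 1" and gJ: "g \<in> J y" and gz: "blinfun_apply g z = 0" and c: "c > 0"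
  shows "\<exists>t>0. norm (y + t *\<^sub>R z) < 1 + t * c"
proof (rule ccontr)
  assume "\<not> ?thesis"
  then have H: "\<And>t. t > 0 \<Longrightarrow> 1 + t * c \<le> norm (y + t *\<^sub>R z)" by (force simp: not_less)
  have gy: "g y = 1" "norm g = 1" using gJ by (auto simp: J_mem)
  have z0: "z \<noteq> 0" using H[of 1] c ny by auto
  have y0: "y \<noteq> 0" using ny by auto
  have zy: "z \<notin> real_vector.span {y}"
  proof
    assume "z \<in> real_vector.span {y}"
    then obtain k where k: "z = k *\<^sub>R y" by (auto simp: real_vector.span_singleton)
    then have "g z = k" using gy by (simp add: blinfun.scaleR_right)
    with gz k z0 show False by simp
  qed
  have yz: "y \<noteq> z" using zy real_vector.span_base[of y "{y}"] by auto
  define sl where "sl s = (norm (y + s *\<^sub>R z) - 1) / s" for s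
  define m where "m = Inf (sl ` {0<..})"
  have slc: "c \<le> sl s" if "s > 0" for s
    using H[OF that] that by (simp add: sl_def pos_le_divide_eq algebra_simps)
  have bdd: "bdd_below (sl ` {0<..})" using slc by (auto intro!: bdd_belowI[of _ c])
  have mc: "c \<le> m" unfolding m_def by (rule cInf_greatest) (auto intro: slc)
  have mle: "m \<le> sl s" if "s > 0" for s unfolding m_def using bdd that by (auto intro: cInf_lower)
  have mz: "m \<le> norm z"
  proof -
    have "m \<le> sl 1" by (rule mle) simp
    also have "\<dots> = norm (y + z) - 1" by (simp add: sl_def)
    also have "\<dots> \<le> norm z" using norm_triangle_ineq[of y z] ny by simp
    finally show ?thesis .
  qed
  have conv: "sl s \<le> sl s'" if s: "s < 0" and s': "s' > 0" for s s'
  proof -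
    define a where "a = s' / (s' - s)"
    define b where "b = - s / (s' - s)"
    have d: "s' - s > 0" using s s' by simp
    have ab: "0 < a" "0 < b" "a + b = 1" "a * s + b * s' = 0"
    proof -
      show "0 < a" unfolding a_def using d s' by simp
      show "0 < b" unfolding b_def using d s by (intro divide_pos_pos) auto
      have ne: "s' - s \<noteq> 0" using d by simp
      have "a + b = (s' + - s) / (s' - s)" unfolding a_def b_def by (rule add_divide_distrib[symmetric])
      also have "\<dots> = 1" using ne by simp
      finally show "a + b = 1" .
      show "a * s + b * s' = 0" unfolding a_def b_def using d by (simp add: field_simps)
    qed
    have "y = a *\<^sub>R (y + s *\<^sub>R z) + b *\<^sub>R (y + s' *\<^sub>R z)"
    proof -
      have "a *\<^sub>R (y + s *\<^sub>R z) + b *\<^sub>R (y + s' *\<^sub>R z) = (a + b) *\<^sub>R y + (a * s + b * s') *\<^sub>R z"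
        by (simp add: algebra_simps)
      then show ?thesis using ab by simp
    qed
    then have "1 \<le> norm (a *\<^sub>R (y + s *\<^sub>R z)) + norm (b *\<^sub>R (y + s' *\<^sub>R z))"
      using ny norm_triangle_ineq by metis
    then have key: "1 \<le> a * norm (y + s *\<^sub>R z) + b * norm (y + s' *\<^sub>R z)"
      using ab by simp
    define P where "P = norm (y + s *\<^sub>R z)"
    define Q where "Q = norm (y + s' *\<^sub>R z)"
    have e: "a * P + b * Q = (s' * P - s * Q) / (s' - s)"
      unfolding a_def b_def by (simp add: diff_divide_distrib)
    have key2: "s' - s \<le> s' * P - s * Q"
      using key d unfolding P_def[symmetric] Q_def[symmetric] e by (simp add: pos_le_divide_eq)
    have "(P - 1) / s \<le> (Q - 1) / s'"
      using key2 s s' by (simp add: field_simps neg_divide_le_eq)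
    then show ?thesis by (simp add: sl_def P_def Q_def)
  qed
  have ml: "sl s \<le> m" if "s < 0" for s
    unfolding m_def by (rule cInf_greatest) (auto intro: conv[OF that])
  have low: "1 + s * m \<le> norm (y + s *\<^sub>R z)" for s
  proof -
    consider "s > 0" | "s = 0" | "s < 0" by linarith
    then show ?thesis
    proof cases
      case 1
      then have "m \<le> (norm (y + s *\<^sub>R z) - 1) / s" using mle[OF 1] by (simp add: sl_def)
      then show ?thesis using 1 by (simp add: pos_le_divide_eq algebra_simps)
    next
      case 2 then show ?thesis using ny by simp
    next
      case 3
      then have "(norm (y + s *\<^sub>R z) - 1) / s \<le> m" using ml[OF 3] by (simp add: sl_def)
      then show ?thesis using 3 by (simp add: neg_divide_le_eq algebra_simps)
    qed
  qed
  have low2: "- (1 + s * m) \<le> norm (y + s *\<^sub>R z)" for s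
  proof -
    have "norm (s *\<^sub>R z) - norm y \<le> norm (y + s *\<^sub>R z)"
      using norm_diff_ineq[of "s *\<^sub>R z" y] by (simp add: add.commute)
    moreover have "- s * m \<le> \<bar>s\<bar> * norm z"
    proof -
      have "- s * m \<le> \<bar>s\<bar> * m" using mc c by (intro mult_right_mono) auto
      also have "\<dots> \<le> \<bar>s\<bar> * norm z" using mz by (intro mult_left_mono) auto
      finally show ?thesis .
    qed
    ultimately show ?thesis using ny by simp
  qed
  define h where "h = real_vector.construct {y, z} (\<lambda>v. if v = y then 1 else m)"
  have iyz: "independent {y, z}"
  proof -
    have iy: "independent {y}" using y0
      by (simp add: independent_insert span_empty)
    have "independent {z, y}" using zy iy by (rule real_vector.independent_insertI)
    moreover have "{z, y} = {y, z}" by auto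
    ultimately show ?thesis by simp
  qed
  have lin: "linear h" unfolding h_def by (rule real_vector.linear_construct[OF iyz])
  have hy: "h y = 1" unfolding h_def by (subst real_vector.construct_basis[OF iyz]) auto
  have hz: "h z = m" unfolding h_def using yz by (subst real_vector.construct_basis[OF iyz]) auto
  have hab: "h (\<alpha> *\<^sub>R y + \<beta> *\<^sub>R z) = \<alpha> + \<beta> * m" for \<alpha> \<beta>
    using hy hz by (simp add: real_vector.linear_add[OF lin] real_vector.linear_scale[OF lin])
  have rep: "\<exists>\<alpha> \<beta>. v = \<alpha> *\<^sub>R y + \<beta> *\<^sub>R z" for v
  proof -
    have "v \<in> real_vector.span (insert y {z})" using span_two_UNIV[OF dimY y0 zy] by simp
    then obtain \<alpha> where "v - \<alpha> *\<^sub>R y \<in> real_vector.span {z}"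
      by (auto simp: real_vector.span_breakdown_eq)
    then obtain \<beta> where "v - \<alpha> *\<^sub>R y = \<beta> *\<^sub>R z" by (auto simp: real_vector.span_singleton)
    then show ?thesis by (metis diff_eq_eq add.commute)
  qed
  have hle: "h v \<le> norm v" for v
  proof -
    obtain \<alpha> \<beta> where v: "v = \<alpha> *\<^sub>R y + \<beta> *\<^sub>R z" using rep by blast
    consider "\<alpha> = 0" | "\<alpha> > 0" | "\<alpha> < 0" by linarith
    then show ?thesis
    proof cases
      case 1
      have "\<beta> * m \<le> \<bar>\<beta>\<bar> * m" using mc c by (intro mult_right_mono) auto
      also have "\<dots> \<le> \<bar>\<beta>\<bar> * norm z" using mz by (intro mult_left_mono) auto
      finally show ?thesis using 1 v hab[of 0 \<beta>] by simp
    next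
      case 2
      have vv: "v = \<alpha> *\<^sub>R (y + (\<beta> / \<alpha>) *\<^sub>R z)" using 2 v by (simp add: scaleR_add_right)
      have "h v = \<alpha> * (1 + (\<beta> / \<alpha>) * m)" using v hab 2 by (simp add: field_simps)
      also have "\<dots> \<le> \<alpha> * norm (y + (\<beta> / \<alpha>) *\<^sub>R z)" using 2 low[of "\<beta> / \<alpha>"] by (intro mult_left_mono) auto
      also have "\<dots> = norm v" using vv 2 by simp
      finally show ?thesis .
    next
      case 3
      have vv: "v = \<alpha> *\<^sub>R (y + (\<beta> / \<alpha>) *\<^sub>R z)" using 3 v by (simp add: scaleR_add_right)
      have "h v = (- \<alpha>) * (- (1 + (\<beta> / \<alpha>) * m))" using v hab 3 by (simp add: field_simps)
      also have "\<dots> \<le> (- \<alpha>) * norm (y + (\<beta> / \<alpha>) *\<^sub>R z)" using 3 low2[of "\<beta> / \<alpha>"] by (intro mult_left_mono) auto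
      also have "\<dots> = norm v" using vv 3 by simp
      finally show ?thesis .
    qed
  qed
  have habs: "\<bar>h v\<bar> \<le> norm v" for v
    using hle[of v] hle[of "- v"] real_vector.linear_neg[OF lin, of v] by simp
  have bl: "bounded_linear h"
    by (rule bounded_linear_intro[where K = 1])
       (use habs in \<open>simp_all add: real_vector.linear_add[OF lin] real_vector.linear_scale[OF lin]\<close>)
  define hb where "hb = Blinfun h"
  have hba: "blinfun_apply hb = h" unfolding hb_def using bl by (rule bounded_linear_Blinfun_apply)
  have nhb: "norm hb = 1"
  proof (rule antisym)
    show "norm hb \<le> 1" by (rule norm_blinfun_bound) (use habs hba in auto)
    have "1 = norm (hb y)" using hba hy by simp
    also have "\<dots> \<le> norm hb * norm y" by (rule norm_blinfun)
    finally show "1 \<le> norm hb" using ny by simp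
  qed
  have "hb \<in> J y" using nhb hba hy by (simp add: J_mem)
  moreover have "\<exists>!f. f \<in> J y" using sm ny by (simp add: smooth_space_def)
  ultimately have "hb = g" using gJ by blast
  then have "m = 0" using hba hz gz by simp
  with mc c show False by simp
qed

lemma pairarg:
  fixes u v :: "'b::real_normed_vector"
  assumes sc: "strictly_convex_space TYPE('b)"
    and nu: "norm u = 1" and nv: "norm v = 1" and gu: "gu \<in> J u" and gv: "gv \<in> J v"
    and nsp: "u \<notin> span {v}"
    and h: "\<And>w. a * blinfun_apply gu w + b * blinfun_apply gv w = 0"
  shows "a = 0 \<and> b = 0"
proof -
  have gu1: "norm gu = 1" "gu u = 1" and gv1: "norm gv = 1" "gv v = 1"
    using gu gv by (auto simp: J_mem)
  have a0: "a = 0"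
  proof (rule ccontr)
    assume an: "a \<noteq> 0"
    define r where "r = - b / a"
    have eq: "gu = r *\<^sub>R gv"
    proof (rule blinfun_eqI)
      fix w
      have "a * gu w = - b * gv w" using h[of w] by simp
      then have "gu w = r * gv w" using an by (simp add: r_def field_simps)
      moreover have "(r *\<^sub>R gv) w = r * gv w" by (simp only: blinfun.scaleR_left real_scaleR_def)
      ultimately show "gu w = (r *\<^sub>R gv) w" by simp
    qed
    have "norm gu = \<bar>r\<bar> * norm gv" using eq by simp
    then have "\<bar>r\<bar> = 1" using gu1 gv1 by simp
    then have "r = 1 \<or> r = -1" by auto
    then show False
    proof
      assume "r = 1"
      then have "gv \<in> J u" using eq gu by simp
      then have "u = v" using strict_conv[OF sc nu nv _ gv] by simp
      then show False using nsp real_vector.span_base[of v "{v}"] by simp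
    next
      assume "r = -1"
      then have "gv (- u) = 1" using eq gu1 by (simp add: blinfun.minus_right blinfun.minus_left)
      then have "gv \<in> J (- u)" using gv1 by (simp add: J_mem)
      then have "- u = v" using strict_conv[OF sc _ nv _ gv] nu by simp
      then have "u = (-1) *\<^sub>R v" by (metis minus_minus scaleR_minus1_left)
      moreover have "(-1) *\<^sub>R v \<in> span {v}"
        by (rule real_vector.span_scale) (rule real_vector.span_base, simp)
      ultimately show False using nsp by simp
    qed
  qed
  have "b * gv v = 0" using h[of v] a0 by simp
  with gv1 a0 show ?thesis by simp
qed

lemma ann_span:
  fixes A :: "('v::real_normed_vector \<Rightarrow>\<^sub>L real) set"
  assumes "finite A"
  shows "(\<And>S. (\<forall>G\<in>A. blinfun_apply G S = 0) \<Longrightarrow> blinfun_apply f S = 0) \<Longrightarrow> f \<in> span A"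
  using assms(1)
proof (induction A arbitrary: f rule: finite_induct)
  case empty
  have "f = 0" by (rule blinfun_eqI) (use empty in simp)
  then show ?case by (simp add: real_vector.span_zero)
next
  case (insert G A)
  show ?case
  proof (cases "\<forall>S. (\<forall>G'\<in>A. G' S = 0) \<longrightarrow> G S = 0")
    case True
    have "f \<in> span A" by (rule insert.IH) (use insert.prems True in auto)
    then show ?thesis using real_vector.span_mono[of A "insert G A"] by auto
  next
    case False
    then obtain S0 where S0: "\<forall>G'\<in>A. G' S0 = 0" "G S0 \<noteq> 0" by auto
    define f' where "f' = f - (f S0 / G S0) *\<^sub>R G"
    have "f' \<in> span A"
    proof (rule insert.IH)
      fix S assume SA: "\<forall>G'\<in>A. G' S = 0"
      define S' where "S' = S - (G S / G S0) *\<^sub>R S0"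
      have "\<forall>G'\<in>insert G A. G' S' = 0"
        using SA S0 by (auto simp: S'_def blinfun.diff_right blinfun.scaleR_right)
      then have "f S' = 0" using insert.prems by blast
      then have "f S = (G S / G S0) * f S0"
        by (simp add: S'_def blinfun.diff_right blinfun.scaleR_right)
      then show "f' S = 0" using S0 by (simp add: f'_def blinfun.diff_left blinfun.scaleR_left field_simps)
    qed
    then have f'1: "f' \<in> span (insert G A)"
      using real_vector.span_mono[of A "insert G A"] by auto
    have G1: "G \<in> span (insert G A)" by (rule real_vector.span_base) simp
    have "f' + (f S0 / G S0) *\<^sub>R G \<in> span (insert G A)"
      by (rule real_vector.span_add[OF f'1 real_vector.span_scale[OF G1]])
    then show ?thesis by (simp add: f'_def)
  qed
qed

lemma indep_dim:
  fixes G :: "nat \<Rightarrow> 'v::real_vector"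
  assumes fin: "finite I"
    and H: "\<And>lam. (\<Sum>i\<in>I. lam i *\<^sub>R G i) = 0 \<Longrightarrow> (\<forall>i\<in>I. lam i = 0)"
  shows "dim (span (G ` I)) = card I"
proof -
  have inj: "inj_on G I"
  proof (rule inj_onI, rule ccontr)
    fix i j assume ij: "i \<in> I" "j \<in> I" "G i = G j" "i \<noteq> j"
    define lam where "lam k = (if k = i then 1 else 0) - (if k = j then (1::real) else 0)" for k
    have pt: "lam k *\<^sub>R G k = (if k = i then G k else 0) - (if k = j then G k else 0)" for k
      using ij by (simp add: lam_def)
    have "(\<Sum>k\<in>I. lam k *\<^sub>R G k) = (\<Sum>k\<in>I. (if k = i then G k else 0)) - (\<Sum>k\<in>I. (if k = j then G k else 0))"
      by (simp only: pt sum_subtractf)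
    also have "\<dots> = G i - G j" using ij fin by (simp add: sum.delta)
    also have "\<dots> = 0" using ij by simp
    finally have "lam i = 0" using H ij by blast
    then show False using ij by (simp add: lam_def)
  qed
  have ind: "independent (G ` I)"
    unfolding real_vector.independent_explicit_module
  proof (intro allI impI)
    fix t u v
    assume t: "finite t" "t \<subseteq> G ` I" "(\<Sum>v\<in>t. u v *\<^sub>R v) = 0" "v \<in> t"
    define lam where "lam k = (if G k \<in> t then u (G k) else 0)" for k
    define I' where "I' = {k \<in> I. G k \<in> t}"
    have tI: "t = G ` I'" using t(2) by (auto simp: I'_def)
    have inj': "inj_on G I'" using inj by (rule inj_on_subset) (auto simp: I'_def)
    have pt: "lam k *\<^sub>R G k = (if G k \<in> t then u (G k) *\<^sub>R G k else 0)" for k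
      by (simp add: lam_def)
    have "(\<Sum>k\<in>I. lam k *\<^sub>R G k) = (\<Sum>k\<in>I'. u (G k) *\<^sub>R G k)"
      unfolding pt I'_def using fin by (simp add: sum.inter_filter)
    also have "\<dots> = (\<Sum>v\<in>t. u v *\<^sub>R v)"
      unfolding tI using inj' by (simp add: sum.reindex)
    also have "\<dots> = 0" by (rule t(3))
    finally have z: "\<forall>k\<in>I. lam k = 0" by (rule H)
    obtain k where k: "k \<in> I" "v = G k" using t by auto
    show "u v = 0" using z k t(4) by (auto simp: lam_def)
  qed
  show ?thesis
    using ind inj by (simp add: real_vector.dim_eq_card_independent card_image)
qed

lemma par_trans:
  fixes x u v :: "'a::real_vector"
  assumes x0: "x \<noteq> 0" and xu: "x \<in> span {u}" and xv: "x \<in> span {v}"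
  shows "v \<in> span {u}"
proof -
  obtain b where b: "x = b *\<^sub>R v" using xv by (auto simp: real_vector.span_singleton)
  have b0: "b \<noteq> 0" using b x0 by auto
  have "v = (1 / b) *\<^sub>R x" using b b0 by simp
  then show ?thesis using xu real_vector.span_scale by metis
qed

lemma bl_c1: "bounded_linear c1"
  by (rule bounded_linear_intro[where K = 1]) (use c_le_norm in auto)
lemma bl_c2: "bounded_linear c2"
  by (rule bounded_linear_intro[where K = 1]) (use c_le_norm in auto)
lemma bl_c3: "bounded_linear c3"
  by (rule bounded_linear_intro[where K = 1]) (use c_le_norm in auto)

definition Rop :: "real \<Rightarrow> real \<Rightarrow> real \<Rightarrow> 'b::real_normed_vector \<Rightarrow> (linf3 \<Rightarrow>\<^sub>L 'b)" where
  "Rop p1 p2 p3 w = Blinfun (\<lambda>x. (p1 * c1 x + p2 * c2 x + p3 * c3 x) *\<^sub>R w)"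

lemma Rop_apply: "blinfun_apply (Rop p1 p2 p3 w) x = (p1 * c1 x + p2 * c2 x + p3 * c3 x) *\<^sub>R w"
proof -
  have "bounded_linear (\<lambda>x. (p1 * c1 x + p2 * c2 x + p3 * c3 x) *\<^sub>R w)"
    using bl_c1 bl_c2 bl_c3 by (intro bounded_linear_intros)
  then show ?thesis unfolding Rop_def by (simp add: bounded_linear_Blinfun_apply)
qed

definition evalf :: "('b::real_normed_vector \<Rightarrow>\<^sub>L real) \<Rightarrow> 'a::real_normed_vector \<Rightarrow> (('a \<Rightarrow>\<^sub>L 'b) \<Rightarrow>\<^sub>L real)" where
  "evalf h x = Blinfun (\<lambda>S. blinfun_apply h (blinfun_apply S x))"

lemma evalf_apply: "blinfun_apply (evalf h x) S = h (S x)"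
proof -
  have "bounded_linear (\<lambda>S. blinfun_apply h (blinfun_apply S x))"
    using bounded_linear_apply_blinfun by (intro bounded_linear_intros)
  then show ?thesis unfolding evalf_def by (simp add: bounded_linear_Blinfun_apply)
qed

lemma evalf_J:
  fixes T :: "'a::real_normed_vector \<Rightarrow>\<^sub>L 'b::real_normed_vector" and h :: "'b \<Rightarrow>\<^sub>L real"
  assumes "norm h = 1" "h (T x) = 1" "norm x = 1" "norm T = 1"
  shows "evalf h x \<in> J T"
proof -
  have le: "norm (evalf h x) \<le> 1"
  proof (rule norm_blinfun_bound)
    fix S :: "'a \<Rightarrow>\<^sub>L 'b"
    have "norm (h (S x)) \<le> norm h * norm (S x)" by (rule norm_blinfun)
    also have "\<dots> \<le> 1 * (norm S * norm x)" using assms norm_blinfun[of S x] by simp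
    finally show "norm (evalf h x S) \<le> 1 * norm S" using assms by (simp add: evalf_apply)
  qed simp
  have "1 = norm (evalf h x T)" using assms by (simp add: evalf_apply)
  also have "\<dots> \<le> norm (evalf h x) * norm T" by (rule norm_blinfun)
  finally have "1 \<le> norm (evalf h x)" using assms by simp
  with le assms show ?thesis by (simp add: J_mem evalf_apply)
qed

definition xv :: "nat \<Rightarrow> linf3" where
  "xv i = (if i = 1 then L3 1 1 1 else if i = 2 then L3 (-1) 1 1 else if i = 3 then L3 (-1) (-1) 1
           else L3 1 (-1) 1)"

lemma xv_simps[simp]: "xv 1 = L3 1 1 1" "xv 2 = L3 (-1) 1 1" "xv 3 = L3 (-1) (-1) 1" "xv 4 = L3 1 (-1) 1"
  by (simp_all add: xv_def)

lemma xv_Suc0[simp]: "xv (Suc 0) = L3 1 1 1" by (simp add: xv_def)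

theorem corollary3p10:
  fixes T :: "linf3 \<Rightarrow>\<^sub>L 'b::real_normed_vector"
  assumes dimY: "real_vector.dim (UNIV :: 'b set) = 2"
    and sc: "strictly_convex_space TYPE('b)"
    and sm: "smooth_space TYPE('b)"
    and nT: "norm T = 1"
    and MT: "M T \<inter> Ext ball_X =
      {L3 1 1 1, - L3 1 1 1, L3 (-1) 1 1, - L3 (-1) 1 1,
       L3 (-1) (-1) 1, - L3 (-1) (-1) 1, L3 1 (-1) 1, - L3 1 (-1) 1}"
  shows "(rank T = 1 \<longrightarrow> k_smooth T 3) \<and> (rank T = 2 \<longrightarrow> k_smooth T 4)"
proof -
  define I :: "nat set" where "I = {1, 2, 3, 4}"
  have finI: "finite I" by (simp add: I_def)
  define y where "y i = T (xv i)" for i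
  define g where "g i = (SOME f. f \<in> J (y i))" for i
  define G where "G i = evalf (g i) (xv i)" for i
  have Gapp: "G i S = g i (S (xv i))" for i S by (simp add: G_def evalf_apply)
  have xvn: "norm (xv i) = 1" if "i \<in> I" for i
    using that by (auto simp: I_def norm_linf3_def xv_def)
  have xvM: "xv i \<in> M T" if "i \<in> I" for i
  proof -
    have "xv i \<in> M T \<inter> Ext ball_X" unfolding MT using that by (auto simp: I_def)
    then show ?thesis by simp
  qed
  have ny: "norm (y i) = 1" if "i \<in> I" for i
    using xvM[OF that] nT by (simp add: M_def y_def)
  have gJ: "g i \<in> J (y i)" if "i \<in> I" for i
  proof -
    have "\<exists>f. f \<in> J (y i)" using sm ny[OF that] by (auto simp: smooth_space_def)
    then show ?thesis unfolding g_def by (rule someI_ex)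
  qed
  have GJ: "G i \<in> J T" if "i \<in> I" for i
    unfolding G_def using gJ[OF that] xvn[OF that] nT by (intro evalf_J) (auto simp: J_mem y_def)
  have keyle: "f S \<le> 0" if fJ: "f \<in> J T" and SG: "\<forall>i\<in>I. G i S = 0" for f S
  proof (rule ccontr)
    assume "\<not> f S \<le> 0"
    then have c: "f S > 0" by simp
    have f1: "norm f = 1" "f T = 1" using fJ by (auto simp: J_mem)
    have "\<forall>i\<in>I. \<exists>t>0. norm (y i + t *\<^sub>R S (xv i)) < 1 + t * f S"
    proof
      fix i assume i: "i \<in> I"
      have "g i (S (xv i)) = 0" using SG i by (simp add: Gapp)
      then show "\<exists>t>0. norm (y i + t *\<^sub>R S (xv i)) < 1 + t * f S"
        by (rule smooth_dir[OF dimY sm ny[OF i] gJ[OF i] _ c])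
    qed
    then obtain tt where tt: "\<And>i. i \<in> I \<Longrightarrow> tt i > 0 \<and> norm (y i + tt i *\<^sub>R S (xv i)) < 1 + tt i * f S"
      by metis
    define t where "t = Min (tt ` I)"
    have t0: "t > 0" unfolding t_def using finI tt by (auto simp: I_def)
    have tle: "t \<le> tt i" if "i \<in> I" for i unfolding t_def using finI that by simp
    have lt: "norm (y i + t *\<^sub>R S (xv i)) < 1 + t * f S" if i: "i \<in> I" for i
      using slope_mono[OF ny[OF i] t0 tle[OF i]] tt[OF i] by blast
    define A where "A = T + t *\<^sub>R S"
    have Aapp: "A (xv i) = y i + t *\<^sub>R S (xv i)" for i
      by (simp add: A_def y_def blinfun.add_left blinfun.scaleR_left)
    define K where "K = Max ((\<lambda>i. norm (A (xv i))) ` I)"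
    have Kle: "norm (A (xv i)) \<le> K" if "i \<in> I" for i unfolding K_def using finI that by simp
    have Klt: "K < 1 + t * f S" unfolding K_def using lt[of 1] lt[of 2] lt[of 3] lt[of 4] by (simp add: I_def Aapp)
    have "norm A \<le> K"
      using Kle[of 1] Kle[of 2] Kle[of 3] Kle[of 4] by (intro op_bound) (auto simp: I_def)
    moreover have "f A = 1 + t * f S"
      using f1 by (simp add: A_def blinfun.add_right blinfun.scaleR_right)
    moreover have "f A \<le> norm A"
      using norm_blinfun[of f A] f1 by simp
    ultimately show False using Klt by simp
  qed
  have key: "f S = 0" if fJ: "f \<in> J T" and SG: "\<forall>i\<in>I. G i S = 0" for f S
  proof -
    have "f S \<le> 0" by (rule keyle[OF fJ SG])
    moreover have "f (- S) \<le> 0"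
      by (rule keyle[OF fJ]) (use SG in \<open>simp add: Gapp blinfun.minus_left blinfun.minus_right\<close>)
    ultimately show ?thesis by (simp add: blinfun.minus_right)
  qed
  have spanJ: "span (J T) = span (G ` I)"
  proof
    have "J T \<subseteq> span (G ` I)"
    proof
      fix f assume fJ: "f \<in> J T"
      show "f \<in> span (G ` I)"
        by (rule ann_span) (use finI key[OF fJ] in auto)
    qed
    then show "span (J T) \<subseteq> span (G ` I)"
      by (intro real_vector.span_minimal real_vector.subspace_span)
    show "span (G ` I) \<subseteq> span (J T)" using GJ by (intro real_vector.span_mono) auto
  qed
  have gapp: "G i (Rop p1 p2 p3 w) = (p1 * c1 (xv i) + p2 * c2 (xv i) + p3 * c3 (xv i)) * g i w" for i p1 p2 p3 w
    by (simp add: Gapp Rop_apply blinfun.scaleR_right)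
  have sumapp: "(\<Sum>i\<in>K. lam i *\<^sub>R G i) R = (\<Sum>i\<in>K. lam i * G i R)" for K lam R
    by (simp add: blinfun.sum_left blinfun.scaleR_left)
  have y1n0: "y 1 \<noteq> 0" using ny[of 1] by (auto simp: I_def)
  have y1s: "y 1 \<in> span {y 1}" by (rule real_vector.span_base) simp
  show ?thesis
  proof (cases "\<forall>i\<in>I. y i \<in> span {y 1}")
    case True
    then have "\<forall>i\<in>I. \<exists>k. y i = k *\<^sub>R y 1" by (auto simp: real_vector.span_singleton)
    then obtain eps where eps: "\<And>i. i \<in> I \<Longrightarrow> y i = eps i *\<^sub>R y 1" by metis
    have epsabs: "\<bar>eps i\<bar> = 1" if i: "i \<in> I" for i
      using ny[OF i] eps[OF i] ny[of 1] by (simp add: I_def)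
    have g1: "norm (g 1) = 1" "g 1 (y 1) = 1" using gJ[of 1] by (auto simp: I_def J_mem)
    have geps: "g i = eps i *\<^sub>R g 1" if i: "i \<in> I" for i
    proof -
      have e2: "eps i * eps i = 1" using epsabs[OF i] by (metis abs_mult_self_eq mult_1_right)
      have "eps i *\<^sub>R g 1 \<in> J (y i)"
        using g1 epsabs[OF i] eps[OF i] e2 by (simp add: J_mem blinfun.scaleR_right blinfun.scaleR_left)
      moreover have "\<exists>!f. f \<in> J (y i)" using sm ny[OF i] by (simp add: smooth_space_def)
      ultimately show ?thesis using gJ[OF i] by blast
    qed
    have Geps: "G i S = eps i * g 1 (S (xv i))" if i: "i \<in> I" for i S
      using geps[OF i] by (simp add: Gapp blinfun.scaleR_left)
    have e2: "eps i * eps i = 1" if i: "i \<in> I" for i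
      using epsabs[OF i] by (metis abs_mult_self_eq mult_1_right)
    have G4: "G 4 = eps 4 *\<^sub>R (eps 1 *\<^sub>R G 1 - eps 2 *\<^sub>R G 2 + eps 3 *\<^sub>R G 3)"
    proof (rule blinfun_eqI)
      fix S :: "linf3 \<Rightarrow>\<^sub>L 'b"
      have x4: "xv 4 = xv 1 - xv 2 + xv 3" by (simp add: linf3_eq_iff)
      have "G 4 S = eps 4 * (g 1 (S (xv 1)) - g 1 (S (xv 2)) + g 1 (S (xv 3)))"
        using Geps[of 4 S] unfolding x4 by (simp add: I_def blinfun.add_right blinfun.diff_right
            del: xv_simps xv_Suc0)
      also have "\<dots> = eps 4 * ((eps 1 * eps 1) * g 1 (S (xv 1)) - (eps 2 * eps 2) * g 1 (S (xv 2))
          + (eps 3 * eps 3) * g 1 (S (xv 3)))"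
        using e2[of 1] e2[of 2] e2[of 3] by (simp add: I_def del: xv_simps xv_Suc0)
      also have "\<dots> = eps 4 * (eps 1 * G 1 S - eps 2 * G 2 S + eps 3 * G 3 S)"
        using Geps[of 1 S] Geps[of 2 S] Geps[of 3 S] by (simp add: I_def mult.assoc del: xv_simps xv_Suc0)
      also have "\<dots> = (eps 4 *\<^sub>R (eps 1 *\<^sub>R G 1 - eps 2 *\<^sub>R G 2 + eps 3 *\<^sub>R G 3)) S"
        by (simp add: blinfun.add_left blinfun.diff_left blinfun.scaleR_left)
      finally show "G 4 S = (eps 4 *\<^sub>R (eps 1 *\<^sub>R G 1 - eps 2 *\<^sub>R G 2 + eps 3 *\<^sub>R G 3)) S" .
    qed
    have G4s: "G 4 \<in> span (G ` {1, 2, 3})"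
      unfolding G4 by (intro real_vector.span_scale real_vector.span_add real_vector.span_diff
          real_vector.span_base) auto
    have spanG: "span (G ` I) = span (G ` {1, 2, 3})"
    proof -
      have "G ` I = insert (G 4) (G ` {1, 2, 3})" by (auto simp: I_def)
      then show ?thesis using real_vector.span_redundant[OF G4s] by simp
    qed
    have dim3: "dim (span (G ` {1, 2, 3})) = 3"
    proof -
      have "dim (span (G ` {1, 2, 3})) = card {1, 2, 3::nat}"
      proof (rule indep_dim)
        fix lam :: "nat \<Rightarrow> real"
        assume z: "(\<Sum>i\<in>{1, 2, 3}. lam i *\<^sub>R G i) = 0"
        have H: "(\<Sum>i\<in>{1, 2, 3::nat}. lam i * ((p1 * c1 (xv i) + p2 * c2 (xv i) + p3 * c3 (xv i)) * eps i)) = 0"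
          for p1 p2 p3
        proof -
          have "0 = (\<Sum>i\<in>{1, 2, 3}. lam i *\<^sub>R G i) (Rop p1 p2 p3 (y 1))" unfolding z by simp
          also have "\<dots> = (\<Sum>i\<in>{1, 2, 3::nat}. lam i * ((p1 * c1 (xv i) + p2 * c2 (xv i) + p3 * c3 (xv i)) * eps i))"
            unfolding sumapp
          proof (rule sum.cong)
            fix i :: nat assume "i \<in> {1, 2, 3}"
            then have i: "i \<in> I" by (auto simp: I_def)
            show "lam i * G i (Rop p1 p2 p3 (y 1)) = lam i * ((p1 * c1 (xv i) + p2 * c2 (xv i) + p3 * c3 (xv i)) * eps i)"
              using gapp[of i] geps[OF i] g1 by (simp add: blinfun.scaleR_left)
          qed simp
          finally show ?thesis by simp
        qed
        have "lam 1 * (2 * eps 1) = 0" using H[of 1 0 1] by simp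
        moreover have "lam 2 * (-2 * eps 2) = 0" using H[of 1 "-1" 0] by simp
        moreover have "lam 3 * (-2 * eps 3) = 0" using H[of 0 1 "-1"] by simp
        moreover have "eps 1 \<noteq> 0" "eps 2 \<noteq> 0" "eps 3 \<noteq> 0" using epsabs[of 1] epsabs[of 2] epsabs[of 3] by (auto simp: I_def)
        ultimately show "\<forall>i\<in>{1, 2, 3}. lam i = 0" by auto
      qed simp
      then show ?thesis by simp
    qed
    have ks3: "k_smooth T 3"
      unfolding k_smooth_def using nT spanJ spanG dim3 by simp
    have rk: "rank T \<noteq> 2"
    proof -
      have "range (blinfun_apply T) \<subseteq> span {y 1}"
      proof
        fix v assume "v \<in> range (blinfun_apply T)"
        then obtain x where v: "v = T x" by auto
        define a where "a = (c1 x + c3 x) / 2"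
        define b where "b = (c2 x - c1 x) / 2"
        define c where "c = (c3 x - c2 x) / 2"
        have "x = a *\<^sub>R xv 1 + b *\<^sub>R xv 2 + c *\<^sub>R xv 3"
          by (simp add: linf3_eq_iff a_def b_def c_def field_simps)
        then have "v = a *\<^sub>R y 1 + b *\<^sub>R y 2 + c *\<^sub>R y 3"
          unfolding v y_def by (metis blinfun.add_right blinfun.scaleR_right)
        moreover have "y 1 \<in> span {y 1}" "y 2 \<in> span {y 1}" "y 3 \<in> span {y 1}"
          using True by (auto simp: I_def)
        ultimately show "v \<in> span {y 1}"
          by (simp add: real_vector.span_add real_vector.span_scale)
      qed
      then have "dim (range (blinfun_apply T)) \<le> card {y 1}"
        by (intro real_vector.dim_le_card) auto
      then show ?thesis by (simp add: rank_def)
    qed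
    show ?thesis using ks3 rk by simp
  next
    case False
    then obtain j where j: "j \<in> I" "y j \<notin> span {y 1}" by blast
    have j1: "j \<noteq> 1" using j y1s by auto
    have yj0: "y j \<noteq> 0" using ny[OF j(1)] by auto
    have rk: "rank T \<noteq> 1"
    proof
      assume r1: "rank T = 1"
      obtain B where B: "B \<subseteq> range (blinfun_apply T)" "independent B"
        "range (blinfun_apply T) \<subseteq> span B" "card B = dim (range (blinfun_apply T))"
        using real_vector.basis_exists by blast
      have cB: "card B = 1" using B(4) r1 by (simp add: rank_def)
      then have fB: "finite B" by (metis card.infinite zero_neq_one)
      have i1: "independent {y 1}" using y1n0 by (simp add: independent_insert span_empty)
      have i2: "independent {y j, y 1}" using j(2) i1 by (rule real_vector.independent_insertI)
      have "{y j, y 1} \<subseteq> span B" using B(3) by (auto simp: y_def)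
      then have "card {y j, y 1} \<le> card B"
        using real_vector.independent_span_bound[OF fB i2] by blast
      moreover have "y j \<noteq> y 1" using j(2) y1s by auto
      ultimately show False using cB by simp
    qed
    have dim4: "dim (span (G ` I)) = card I"
    proof (rule indep_dim[OF finI])
      fix lam :: "nat \<Rightarrow> real"
      assume z: "(\<Sum>i\<in>I. lam i *\<^sub>R G i) = 0"
      have H: "(\<Sum>i\<in>I. lam i * ((p1 * c1 (xv i) + p2 * c2 (xv i) + p3 * c3 (xv i)) * g i w)) = 0"
        for p1 p2 p3 w
      proof -
        have "0 = (\<Sum>i\<in>I. lam i *\<^sub>R G i) (Rop p1 p2 p3 w)" unfolding z by simp
        also have "\<dots> = (\<Sum>i\<in>I. lam i * ((p1 * c1 (xv i) + p2 * c2 (xv i) + p3 * c3 (xv i)) * g i w))"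
          unfolding sumapp gapp by simp
        finally show ?thesis by simp
      qed
      have pairgen: "a = 0 \<and> b = 0"
        if k: "k \<in> I" and l: "l \<in> I" and hw: "\<And>w. a * g k w + b * g l w = 0"
          and nsp: "y k \<notin> span {y l} \<or> y l \<notin> span {y k}" for k l a b
        using nsp
      proof
        assume "y k \<notin> span {y l}"
        then show ?thesis using pairarg[OF sc ny[OF k] ny[OF l] gJ[OF k] gJ[OF l] _ hw] by blast
      next
        assume n: "y l \<notin> span {y k}"
        have hw': "\<And>w. b * g l w + a * g k w = 0" using hw by (simp add: add.commute)
        show ?thesis using pairarg[OF sc ny[OF l] ny[OF k] gJ[OF l] gJ[OF k] n hw'] by blast
      qed
      have H4: "lam 1 * ((p1 + p2 + p3) * g 1 w) + lam 2 * ((- p1 + p2 + p3) * g 2 w)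
          + lam 3 * ((- p1 - p2 + p3) * g 3 w) + lam 4 * ((p1 - p2 + p3) * g 4 w) = 0" for p1 p2 p3 w
        using H[of p1 p2 p3 w] by (simp add: I_def algebra_simps)
      have kI: "1 \<in> I" "2 \<in> I" "3 \<in> I" "4 \<in> I" by (auto simp: I_def)
      have P12: "lam 1 = 0 \<and> lam 2 = 0" if "y 1 \<notin> span {y 2} \<or> y 2 \<notin> span {y 1}"
      proof -
        have "(2 * lam 1) * g 1 w + (2 * lam 2) * g 2 w = 0" for w
          using H4[of 0 1 1 w] by (simp add: algebra_simps)
        from pairgen[OF kI(1) kI(2) this that] show ?thesis by simp
      qed
      have P34: "lam 3 = 0 \<and> lam 4 = 0" if "y 3 \<notin> span {y 4} \<or> y 4 \<notin> span {y 3}"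
      proof -
        have "(-2 * lam 3) * g 3 w + (-2 * lam 4) * g 4 w = 0" for w
          using H4[of 0 1 "-1" w] by (simp add: algebra_simps)
        from pairgen[OF kI(3) kI(4) this that] show ?thesis by simp
      qed
      have P14: "lam 1 = 0 \<and> lam 4 = 0" if "y 1 \<notin> span {y 4} \<or> y 4 \<notin> span {y 1}"
      proof -
        have "(2 * lam 1) * g 1 w + (2 * lam 4) * g 4 w = 0" for w
          using H4[of 1 0 1 w] by (simp add: algebra_simps)
        from pairgen[OF kI(1) kI(4) this that] show ?thesis by simp
      qed
      have P23: "lam 2 = 0 \<and> lam 3 = 0" if "y 2 \<notin> span {y 3} \<or> y 3 \<notin> span {y 2}"
      proof -
        have "(-2 * lam 2) * g 2 w + (-2 * lam 3) * g 3 w = 0" for w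
          using H4[of 1 0 "-1" w] by (simp add: algebra_simps)
        from pairgen[OF kI(2) kI(3) this that] show ?thesis by simp
      qed
      have P13: "lam 1 = 0 \<and> lam 3 = 0" if "y 1 \<notin> span {y 3} \<or> y 3 \<notin> span {y 1}"
      proof -
        have "(2 * lam 1) * g 1 w + (-2 * lam 3) * g 3 w = 0" for w
          using H4[of 1 1 0 w] by (simp add: algebra_simps)
        from pairgen[OF kI(1) kI(3) this that] show ?thesis by simp
      qed
      have P24: "lam 2 = 0 \<and> lam 4 = 0" if "y 2 \<notin> span {y 4} \<or> y 4 \<notin> span {y 2}"
      proof -
        have "(-2 * lam 2) * g 2 w + (2 * lam 4) * g 4 w = 0" for w
          using H4[of 1 "-1" 0 w] by (simp add: algebra_simps)
        from pairgen[OF kI(2) kI(4) this that] show ?thesis by simp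
      qed
      have imps: "y 1 \<notin> span {y 2} \<Longrightarrow> lam 1 = 0" "y 2 \<notin> span {y 1} \<Longrightarrow> lam 2 = 0"
        "y 3 \<notin> span {y 4} \<Longrightarrow> lam 3 = 0" "y 4 \<notin> span {y 3} \<Longrightarrow> lam 4 = 0"
        "y 1 \<notin> span {y 4} \<Longrightarrow> lam 1 = 0" "y 4 \<notin> span {y 1} \<Longrightarrow> lam 4 = 0"
        "y 2 \<notin> span {y 3} \<Longrightarrow> lam 2 = 0" "y 3 \<notin> span {y 2} \<Longrightarrow> lam 3 = 0"
        "y 1 \<notin> span {y 3} \<Longrightarrow> lam 1 = 0" "y 3 \<notin> span {y 1} \<Longrightarrow> lam 3 = 0"
        "y 2 \<notin> span {y 4} \<Longrightarrow> lam 2 = 0" "y 4 \<notin> span {y 2} \<Longrightarrow> lam 4 = 0"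
        using P12 P34 P14 P23 P13 P24 by blast+
      have allp: "lam k = 0" if "k \<in> I" "l \<in> I" "k \<noteq> l" "y k \<notin> span {y l}" for k l
      proof -
        have "k = 1 \<or> k = 2 \<or> k = 3 \<or> k = 4" "l = 1 \<or> l = 2 \<or> l = 3 \<or> l = 4"
          using that(1,2) by (auto simp: I_def)
        then show ?thesis using that(3,4) imps by (elim disjE) simp_all
      qed
      have ex: "\<exists>l\<in>I. k \<noteq> l \<and> y k \<notin> span {y l}" if k: "k \<in> I" for k
      proof (cases "k = j")
        case True
        then show ?thesis using j j1 kI by blast
      next
        case kj: False
        show ?thesis
        proof (cases "y k \<in> span {y 1}")
          case False
          then have "k \<noteq> 1" using y1s by auto
          then show ?thesis using False kI by blast
        next
          case True
          have "y k \<notin> span {y j}"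
          proof
            assume "y k \<in> span {y j}"
            then have "y j \<in> span {y 1}"
              using par_trans[of "y k" "y 1" "y j"] True ny[OF k] by fastforce
            with j show False by simp
          qed
          then show ?thesis using kj j by blast
        qed
      qed
      show "\<forall>i\<in>I. lam i = 0" using ex allp by blast
    qed
    have ks4: "k_smooth T 4"
      unfolding k_smooth_def using nT spanJ dim4 by (simp add: I_def)
    show ?thesis using ks4 rk by simp
  qed
qed

end
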